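(* Let $S\subseteq[n]$ with $|S|=\tau$ and $i\in S$. Then (1) $C_f^{(i)}\le C_f^{(S)}\le C_f$; and (2) $\frac1nC_f^{\otimes}=C_f^{1}\le C_f^{\tau}\le C_f^{n}=C_f$.
   Context: Let $\mathcal{M}=\mathcal{M}_1\times\cdots\times\mathcal{M}_n$, each $\mathcal{M}_i\subset\mathbb{R}^{m_i}$ nonempty compact convex, and $f:\mathbb{R}^m\to\mathbb{R}$ differentiable. Notation: for $S\subseteq[n]$, $x_{(S)}$ is the subvector of blocks in $S$, $\mathcal{M}^{(S)}=\prod_{i\in S}\mathcal{M}_i$, $\nabla_{(S)}f$ the partial gradient, $s_{[S]}$ is $s_{(S)}$ padded by zeros outside $S$. Set curvature: $C_f^{(S)}=\sup\frac{2}{\gamma^2}\big(f(y)-f(x)-\langle y_{(S)}-x_{(S)},\nabla_{(S)}f(x)\rangle\big)$ over $x\in\mathcal{M}$, $s_{(S)}\in\mathcal{M}^{(S)}$, $\gamma\in(0,1]$, $y=x+\gamma(s_{[S]}-x_{[S]})$. $C_f^{(i)}=C_f^{(\{i\})}$ (coordinate curvature), $C_f^{\otimes}=\sum_{i=1}^nC_f^{(i)}$ (product curvature), $C_f=\sup_{x,s\in\mathcal{M},\gamma\in(0,1],y=x+\gamma(s-x)}\frac{2}{\gamma^2}(f(y)-f(x)-\langle y-x,\nabla f(x)\rangle)$ (global curvature), and $C_f^\tau=\binom{n}{\tau}^{-1}\sum_{S\subseteq[n],|S|=\tau}C_f^{(S)}$. *)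

theory Defs
  imports "HOL-Analysis.Analysis"
begin

text \<open>Coordinates of R^m are indexed by the finite type 'm; blk j is the block (in 1..n)
  that coordinate j belongs to. A block vector of R^{m_i} is represented as a vector of R^m
  supported on block i.\<close>

definition bproj :: "('m \<Rightarrow> nat) \<Rightarrow> nat set \<Rightarrow> real^'m \<Rightarrow> real^'m" where
  "bproj blk S x = (\<chi> j. if blk j \<in> S then x $ j else 0)"

text \<open>prodset blk Mi S: the vectors s_[S] with s_(S) in M^(S) (padded by zeros outside S).\<close>
definition prodset :: "('m \<Rightarrow> nat) \<Rightarrow> (nat \<Rightarrow> (real^'m) set) \<Rightarrow> nat set \<Rightarrow> (real^'m) set" where
  "prodset blk Mi S = {s. (\<forall>j. blk j \<notin> S \<longrightarrow> s $ j = 0) \<and> (\<forall>i\<in>S. bproj blk {i} s \<in> Mi i)}"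

definition set_curv :: "(real^'m \<Rightarrow> real) \<Rightarrow> ('m \<Rightarrow> nat) \<Rightarrow> (nat \<Rightarrow> (real^'m) set) \<Rightarrow> nat \<Rightarrow> nat set \<Rightarrow> ereal" where
  "set_curv f blk Mi n S =
     (SUP (x, s, \<gamma>) \<in> {(x, s, \<gamma>). x \<in> prodset blk Mi {1..n} \<and> s \<in> prodset blk Mi S \<and> 0 < \<gamma> \<and> \<gamma> \<le> (1::real)}.
        ereal (let y = x + \<gamma> *\<^sub>R (s - bproj blk S x) in
               2 / \<gamma>^2 * (f y - f x - frechet_derivative f (at x) (bproj blk S (y - x)))))"

definition coord_curv :: "(real^'m \<Rightarrow> real) \<Rightarrow> ('m \<Rightarrow> nat) \<Rightarrow> (nat \<Rightarrow> (real^'m) set) \<Rightarrow> nat \<Rightarrow> nat \<Rightarrow> ereal" where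
  "coord_curv f blk Mi n i = set_curv f blk Mi n {i}"

definition prod_curv :: "(real^'m \<Rightarrow> real) \<Rightarrow> ('m \<Rightarrow> nat) \<Rightarrow> (nat \<Rightarrow> (real^'m) set) \<Rightarrow> nat \<Rightarrow> ereal" where
  "prod_curv f blk Mi n = (\<Sum>i\<in>{1..n}. coord_curv f blk Mi n i)"

definition glob_curv :: "(real^'m \<Rightarrow> real) \<Rightarrow> (real^'m) set \<Rightarrow> ereal" where
  "glob_curv f M =
     (SUP (x, s, \<gamma>) \<in> {(x, s, \<gamma>). x \<in> M \<and> s \<in> M \<and> 0 < \<gamma> \<and> \<gamma> \<le> (1::real)}.
        ereal (let y = x + \<gamma> *\<^sub>R (s - x) in
               2 / \<gamma>^2 * (f y - f x - frechet_derivative f (at x) (y - x))))"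

definition tau_curv :: "(real^'m \<Rightarrow> real) \<Rightarrow> ('m \<Rightarrow> nat) \<Rightarrow> (nat \<Rightarrow> (real^'m) set) \<Rightarrow> nat \<Rightarrow> nat \<Rightarrow> ereal" where
  "tau_curv f blk Mi n \<tau> =
     ereal (1 / real (n choose \<tau>)) * (\<Sum>S\<in>{S. S \<subseteq> {1..n} \<and> card S = \<tau>}. set_curv f blk Mi n S)"

end

theory Submission
  imports Defs
begin


lemma bproj_nth[simp]: "bproj blk S x $ j = (if blk j \<in> S then x $ j else 0)"
  by (simp add: bproj_def)

lemma set_curv_mono:
  assumes "T \<subseteq> S" "S \<subseteq> {1..n}"
  shows "set_curv f blk Mi n T \<le> set_curv f blk Mi n S"
  unfolding set_curv_def
proof (rule SUP_mono)
  fix t assume "t \<in> {(x, s, \<gamma>). x \<in> prodset blk Mi {1..n} \<and> s \<in> prodset blk Mi T \<and> 0 < \<gamma> \<and> \<gamma> \<le> (1::real)}"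
  then obtain x s \<gamma> where t: "t = (x,s,\<gamma>)" and x: "x \<in> prodset blk Mi {1..n}"
    and s: "s \<in> prodset blk Mi T" and g: "0<\<gamma>" "\<gamma>\<le>1" by auto
  define s' where "s' = s + bproj blk (S - T) x"
  have sz: "\<And>j. blk j \<notin> T \<Longrightarrow> s $ j = 0" using s by (simp add: prodset_def)
  have s'm: "s' \<in> prodset blk Mi S"
    unfolding prodset_def
  proof (intro CollectI conjI allI impI ballI)
    fix j assume "blk j \<notin> S" then show "s' $ j = 0" using sz assms(1) by (auto simp: s'_def)
  next
    fix k assume k: "k \<in> S"
    show "bproj blk {k} s' \<in> Mi k"
    proof (cases "k \<in> T")
      case True
      have "bproj blk {k} s' = bproj blk {k} s" using True by (auto simp: vec_eq_iff s'_def)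
      then show ?thesis using s True by (simp add: prodset_def)
    next
      case False
      have "bproj blk {k} s' = bproj blk {k} x" using False k sz by (auto simp: vec_eq_iff s'_def)
      then show ?thesis using x k assms(2) by (auto simp: prodset_def)
    qed
  qed
  have e1: "s' - bproj blk S x = s - bproj blk T x"
    using assms(1) by (auto simp: vec_eq_iff s'_def)
  have e2: "bproj blk S (\<gamma> *\<^sub>R (s - bproj blk T x)) = bproj blk T (\<gamma> *\<^sub>R (s - bproj blk T x))"
    using assms(1) sz by (auto simp: vec_eq_iff)
  show "\<exists>m\<in>{(x, s, \<gamma>). x \<in> prodset blk Mi {1..n} \<and> s \<in> prodset blk Mi S \<and> 0 < \<gamma> \<and> \<gamma> \<le> (1::real)}.
      (\<lambda>(x, s, \<gamma>). ereal (let y = x + \<gamma> *\<^sub>R (s - bproj blk T x) in 2 / \<gamma>^2 * (f y - f x - frechet_derivative f (at x) (bproj blk T (y - x))))) t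
      \<le> (\<lambda>(x, s, \<gamma>). ereal (let y = x + \<gamma> *\<^sub>R (s - bproj blk S x) in 2 / \<gamma>^2 * (f y - f x - frechet_derivative f (at x) (bproj blk S (y - x))))) m"
    by (rule bexI[of _ "(x,s',\<gamma>)"]) (use x s'm g in \<open>auto simp: t e1 e2 Let_def\<close>)
qed

lemma set_curv_glob:
  assumes blk: "\<forall>j. blk j \<in> {1..n}"
  shows "set_curv f blk Mi n {1..n} = glob_curv f (prodset blk Mi {1..n})"
proof -
  have "\<And>x. bproj blk {1..n} x = x" using blk by (simp add: vec_eq_iff)
  then show ?thesis unfolding set_curv_def glob_curv_def by simp
qed

lemma set_curv_not_minf:
  assumes blk: "\<forall>j. blk j \<in> {1..n}"
    and Mi_sub: "\<forall>k\<in>{1..n}. Mi k \<subseteq> {v. \<forall>j. blk j \<noteq> k \<longrightarrow> v $ j = 0}"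
    and Mi_ne: "\<forall>k\<in>{1..n}. Mi k \<noteq> {}"
    and S: "S \<subseteq> {1..n}"
  shows "set_curv f blk Mi n S \<noteq> -\<infinity>"
proof -
  define m where "m k = (SOME v. v \<in> Mi k)" for k
  have m: "m k \<in> Mi k" if "k \<in> {1..n}" for k using Mi_ne that unfolding m_def by (metis some_in_eq)
  define x where "x = (\<chi> j. m (blk j) $ j)"
  have x: "x \<in> prodset blk Mi {1..n}"
    unfolding prodset_def
  proof (intro CollectI conjI allI impI ballI)
    fix j assume "blk j \<notin> {1..n}" then show "x $ j = 0" using blk by auto
  next
    fix k assume k: "k \<in> {1..n}"
    have z: "\<forall>j. blk j \<noteq> k \<longrightarrow> m k $ j = 0" using m[OF k] Mi_sub k by blast
    have "bproj blk {k} x = m k" using z by (auto simp: vec_eq_iff x_def)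
    then show "bproj blk {k} x \<in> Mi k" using m[OF k] by simp
  qed
  have s: "bproj blk S x \<in> prodset blk Mi S"
    unfolding prodset_def
  proof (intro CollectI conjI allI impI ballI)
    fix j assume "blk j \<notin> S" then show "bproj blk S x $ j = 0" by auto
  next
    fix k assume k: "k \<in> S"
    have "bproj blk {k} (bproj blk S x) = bproj blk {k} x" using k by (auto simp: vec_eq_iff)
    then show "bproj blk {k} (bproj blk S x) \<in> Mi k" using x k S by (auto simp: prodset_def)
  qed
  let ?A = "{(x, s, \<gamma>). x \<in> prodset blk Mi {1..n} \<and> s \<in> prodset blk Mi S \<and> 0 < \<gamma> \<and> \<gamma> \<le> (1::real)}"
  let ?g = "(\<lambda>(x, s, \<gamma>). ereal (let y = x + \<gamma> *\<^sub>R (s - bproj blk S x) in 2 / \<gamma>^2 * (f y - f x - frechet_derivative f (at x) (bproj blk S (y - x)))))"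
  have "?g (x, bproj blk S x, 1) \<le> Sup (?g ` ?A)"
    by (rule SUP_upper) (use x s in auto)
  then show ?thesis unfolding set_curv_def by (auto simp: Let_def)
qed



lemma count_containing:
  assumes i: "i \<in> {1..n}" and t: "1 \<le> \<tau>"
  shows "card {S \<in> {S. S \<subseteq> {1..n} \<and> card S = \<tau>}. i \<in> S} = (n - 1) choose (\<tau> - 1)"
proof -
  let ?B = "{T. T \<subseteq> {1..n} - {i} \<and> card T = \<tau> - 1}"
  have eq: "{S \<in> {S. S \<subseteq> {1..n} \<and> card S = \<tau>}. i \<in> S} = insert i ` ?B"
  proof (intro equalityI subsetI)
    fix S assume "S \<in> {S \<in> {S. S \<subseteq> {1..n} \<and> card S = \<tau>}. i \<in> S}"
    then have S: "S \<subseteq> {1..n}" "card S = \<tau>" "i \<in> S" by auto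
    have fin: "finite S" using S(1) finite_subset by blast
    have "S - {i} \<in> ?B" using S fin by auto
    moreover have "S = insert i (S - {i})" using S by auto
    ultimately show "S \<in> insert i ` ?B" by blast
  next
    fix S assume "S \<in> insert i ` ?B"
    then obtain T where T: "T \<subseteq> {1..n} - {i}" "card T = \<tau> - 1" "S = insert i T" by auto
    have fin: "finite T" using T(1) finite_subset by blast
    have "i \<notin> T" using T(1) by auto
    then have "card S = \<tau>" using T fin t by simp
    then show "S \<in> {S \<in> {S. S \<subseteq> {1..n} \<and> card S = \<tau>}. i \<in> S}" using T i by auto
  qed
  have inj: "inj_on (insert i) ?B"
    by (rule inj_onI) (subst (asm) insert_ident; blast)
  have "card (insert i ` ?B) = card ?B" by (rule card_image[OF inj])
  also have "\<dots> = card ({1..n} - {i}) choose (\<tau> - 1)" by (rule n_subsets) simp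
  also have "card ({1..n} - {i}) = n - 1" using i by simp
  finally show ?thesis using eq by simp
qed

lemma real_avg_ineq:
  fixes a :: "nat \<Rightarrow> real" and b :: "nat set \<Rightarrow> real"
  assumes n: "1 \<le> n" and t: "1 \<le> \<tau>" "\<tau> \<le> n"
    and ab: "\<And>S i. S \<subseteq> {1..n} \<Longrightarrow> card S = \<tau> \<Longrightarrow> i \<in> S \<Longrightarrow> a i \<le> b S"
  shows "1 / real n * (\<Sum>i\<in>{1..n}. a i) \<le> 1 / real (n choose \<tau>) * (\<Sum>S\<in>{S. S \<subseteq> {1..n} \<and> card S = \<tau>}. b S)"
proof -
  let ?F = "{S. S \<subseteq> {1..n} \<and> card S = \<tau>}"
  let ?K = "(n - 1) choose (\<tau> - 1)"
  have finF: "finite ?F" by (rule finite_subset[of _ "Pow {1..n}"]) auto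
  have "(\<Sum>S\<in>?F. real \<tau> * b S) = (\<Sum>S\<in>?F. \<Sum>i\<in>S. b S)"
    by (rule sum.cong) auto
  also have "\<dots> \<ge> (\<Sum>S\<in>?F. \<Sum>i\<in>S. a i)"
    by (rule sum_mono, rule sum_mono) (use ab in auto)
  also have "(\<Sum>S\<in>?F. \<Sum>i\<in>S. a i) = (\<Sum>S\<in>?F. \<Sum>i\<in>{i\<in>{1..n}. i \<in> S}. a i)"
  proof (rule sum.cong)
    fix S assume "S \<in> ?F" then have "{i\<in>{1..n}. i \<in> S} = S" by auto
    then show "(\<Sum>i\<in>S. a i) = (\<Sum>i\<in>{i\<in>{1..n}. i \<in> S}. a i)" by simp
  qed simp
  also have "\<dots> = (\<Sum>i\<in>{1..n}. \<Sum>S | S \<in> ?F \<and> i \<in> S. a i)"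
    by (rule sum.swap_restrict) (use finF in auto)
  also have "\<dots> = (\<Sum>i\<in>{1..n}. real ?K * a i)"
  proof (rule sum.cong)
    fix i assume i: "i \<in> {1..n}"
    have "card {S. S \<in> ?F \<and> i \<in> S} = ?K" using count_containing[OF i t(1)] by simp
    then show "(\<Sum>S | S \<in> ?F \<and> i \<in> S. a i) = real ?K * a i" by simp
  qed simp
  finally have A: "real ?K * (\<Sum>i\<in>{1..n}. a i) \<le> real \<tau> * (\<Sum>S\<in>?F. b S)"
    by (simp add: sum_distrib_left)
  have Kpos: "0 < ?K" using t by simp
  have C: "real \<tau> * real (n choose \<tau>) = real n * real ?K"
  proof -
    have "\<tau> * (n choose \<tau>) = n * ?K" using times_binomial_minus1_eq[of \<tau> n] t by simp
    then show ?thesis by (metis of_nat_mult)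
  qed
  have Cpos: "0 < real (n choose \<tau>)" using t by simp
  have npos: "0 < real n" using n by simp
  have tpos: "0 < real \<tau>" using t by simp
  define sa where "sa = (\<Sum>i\<in>{1..n}. a i)"
  define sb where "sb = (\<Sum>S\<in>?F. b S)"
  have A': "real ?K * sa \<le> real \<tau> * sb" using A by (simp add: sa_def sb_def)
  have "real \<tau> * (real (n choose \<tau>) * sa) = real n * (real ?K * sa)" using C by (simp add: algebra_simps)
  also have "\<dots> \<le> real n * (real \<tau> * sb)" using A' npos by simp
  finally have "real (n choose \<tau>) * sa \<le> real n * sb" using tpos by (simp add: algebra_simps)
  then have "sa / real n \<le> sb / real (n choose \<tau>)" using npos Cpos by (simp add: field_simps)
  then show ?thesis by (simp add: sa_def sb_def)
qed



lemma ereal_avg_le: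
  fixes b :: "'a \<Rightarrow> ereal"
  assumes fin: "finite F" and ne: "F \<noteq> {}" and le: "\<forall>S\<in>F. b S \<le> G" and nm: "\<forall>S\<in>F. b S \<noteq> -\<infinity>"
  shows "ereal (1 / real (card F)) * sum b F \<le> G"
proof (cases G)
  case PInf then show ?thesis by simp
next
  case MInf
  then show ?thesis using le nm ne by auto
next
  case (real g)
  define r where "r S = real_of_ereal (b S)" for S
  have br: "b S = ereal (r S)" if "S \<in> F" for S
    using le nm that real unfolding r_def by (cases "b S") auto
  have rg: "r S \<le> g" if "S \<in> F" for S using le that br real by fastforce
  have "sum b F = (\<Sum>S\<in>F. ereal (r S))" by (rule sum.cong) (auto simp: br)
  then have "sum b F = ereal (sum r F)" by (simp only: sum_ereal)
  moreover have "sum r F \<le> real (card F) * g" using sum_mono[of F r "\<lambda>_. g"] rg by simp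
  moreover have "0 < real (card F)" using fin ne by (simp add: card_gt_0_iff)
  ultimately show ?thesis using real by (simp add: field_simps)
qed

lemma ereal_avg_ineq:
  fixes a :: "nat \<Rightarrow> ereal" and b :: "nat set \<Rightarrow> ereal"
  assumes n: "1 \<le> n" and t: "1 \<le> \<tau>" "\<tau> \<le> n"
    and an: "\<And>i. i \<in> {1..n} \<Longrightarrow> a i \<noteq> -\<infinity>"
    and bn: "\<And>S. S \<subseteq> {1..n} \<Longrightarrow> b S \<noteq> -\<infinity>"
    and ab: "\<And>S i. S \<subseteq> {1..n} \<Longrightarrow> card S = \<tau> \<Longrightarrow> i \<in> S \<Longrightarrow> a i \<le> b S"
  shows "ereal (1 / real n) * (\<Sum>i\<in>{1..n}. a i) \<le> ereal (1 / real (n choose \<tau>)) * (\<Sum>S\<in>{S. S \<subseteq> {1..n} \<and> card S = \<tau>}. b S)"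
proof -
  let ?F = "{S. S \<subseteq> {1..n} \<and> card S = \<tau>}"
  have finF: "finite ?F" by (rule finite_subset[of _ "Pow {1..n}"]) auto
  have Cpos: "0 < real (n choose \<tau>)" using t by simp
  show ?thesis
  proof (cases "\<exists>S\<in>?F. b S = \<infinity>")
    case True
    then have "(\<Sum>S\<in>?F. b S) = \<infinity>" using finF by (simp add: sum_Pinfty)
    then show ?thesis using Cpos by simp
  next
    case False
    define rb where "rb S = real_of_ereal (b S)" for S
    have brb: "b S = ereal (rb S)" if "S \<in> ?F" for S
      using False bn[of S] that unfolding rb_def by (cases "b S") auto
    define ra where "ra i = real_of_ereal (a i)" for i
    have ara: "a i = ereal (ra i)" if i: "i \<in> {1..n}" for i
    proof -
      have "card {S \<in> ?F. i \<in> S} = (n - 1) choose (\<tau> - 1)" by (rule count_containing[OF i t(1)])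
      moreover have "0 < (n - 1) choose (\<tau> - 1)" using t by simp
      ultimately have "{S \<in> ?F. i \<in> S} \<noteq> {}" by (metis card.empty less_irrefl)
      then obtain S where S: "S \<in> ?F" "i \<in> S" by auto
      have "a i \<le> b S" using ab S by auto
      then have "a i \<noteq> \<infinity>" using brb[OF S(1)] by auto
      then show ?thesis using an[OF i] unfolding ra_def by (cases "a i") auto
    qed
    have sa: "(\<Sum>i\<in>{1..n}. a i) = ereal (\<Sum>i\<in>{1..n}. ra i)"
    proof -
      have "(\<Sum>i\<in>{1..n}. a i) = (\<Sum>i\<in>{1..n}. ereal (ra i))" by (rule sum.cong) (auto simp: ara)
      then show ?thesis by (simp only: sum_ereal)
    qed
    have sb: "(\<Sum>S\<in>?F. b S) = ereal (\<Sum>S\<in>?F. rb S)"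
    proof -
      have "(\<Sum>S\<in>?F. b S) = (\<Sum>S\<in>?F. ereal (rb S))" by (rule sum.cong) (use brb in blast)+
      then show ?thesis by (simp only: sum_ereal)
    qed
    have "1 / real n * (\<Sum>i\<in>{1..n}. ra i) \<le> 1 / real (n choose \<tau>) * (\<Sum>S\<in>?F. rb S)"
    proof (rule real_avg_ineq[OF n t])
      fix S i assume S: "S \<subseteq> {1..n}" "card S = \<tau>" "i \<in> S"
      then have "a i \<le> b S" by (rule ab)
      moreover have "i \<in> {1..n}" using S by auto
      ultimately show "ra i \<le> rb S" using ara brb S by fastforce
    qed
    then show ?thesis unfolding sa sb by simp
  qed
qed


theorem lemma1:
  fixes f :: "real^'m \<Rightarrow> real" and blk :: "'m \<Rightarrow> nat" and Mi :: "nat \<Rightarrow> (real^'m) set"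
    and n \<tau> i :: nat and S :: "nat set"
  assumes blk: "\<forall>j. blk j \<in> {1..n}"
    and Mi_sub: "\<forall>k\<in>{1..n}. Mi k \<subseteq> {v. \<forall>j. blk j \<noteq> k \<longrightarrow> v $ j = 0}"
    and Mi_ne: "\<forall>k\<in>{1..n}. Mi k \<noteq> {}"
    and Mi_compact: "\<forall>k\<in>{1..n}. compact (Mi k)"
    and Mi_convex: "\<forall>k\<in>{1..n}. convex (Mi k)"
    and f_diff: "\<forall>x. f differentiable (at x)"
    and S: "S \<subseteq> {1..n}" "card S = \<tau>" "i \<in> S"
  shows "coord_curv f blk Mi n i \<le> set_curv f blk Mi n S
       \<and> set_curv f blk Mi n S \<le> glob_curv f (prodset blk Mi {1..n})
       \<and> ereal (1 / real n) * prod_curv f blk Mi n = tau_curv f blk Mi n 1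
       \<and> tau_curv f blk Mi n 1 \<le> tau_curv f blk Mi n \<tau>
       \<and> tau_curv f blk Mi n \<tau> \<le> tau_curv f blk Mi n n
       \<and> tau_curv f blk Mi n n = glob_curv f (prodset blk Mi {1..n})"
proof -
  let ?C = "set_curv f blk Mi n"
  let ?G = "glob_curv f (prodset blk Mi {1..n})"
  let ?F = "{S. S \<subseteq> {1..n} \<and> card S = \<tau>}"
  have finS: "finite S" using S(1) finite_subset by blast
  have n1: "1 \<le> n" using S by auto
  have t1: "1 \<le> \<tau>" using S finS by (metis card_0_eq empty_iff less_one not_le)
  have tn: "\<tau> \<le> n" using card_mono[OF _ S(1)] S(2) by simp
  have glob: "?C {1..n} = ?G" by (rule set_curv_glob[OF blk])
  have nm: "\<And>T. T \<subseteq> {1..n} \<Longrightarrow> ?C T \<noteq> -\<infinity>"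
    by (rule set_curv_not_minf[OF blk Mi_sub Mi_ne])
  have c1: "coord_curv f blk Mi n i \<le> ?C S"
    unfolding coord_curv_def by (rule set_curv_mono) (use S in auto)
  have le_G: "\<And>T. T \<subseteq> {1..n} \<Longrightarrow> ?C T \<le> ?G"
    using set_curv_mono[of _ "{1..n}"] glob by (metis order_refl)
  have c2: "?C S \<le> ?G" by (rule le_G[OF S(1)])
  have F1: "{S. S \<subseteq> {1..n} \<and> card S = 1} = (\<lambda>i. {i}) ` {1..n}"
    by (auto simp: card_1_singleton_iff)
  have c3: "tau_curv f blk Mi n 1 = ereal (1 / real n) * prod_curv f blk Mi n"
    unfolding tau_curv_def prod_curv_def coord_curv_def F1
    by (subst sum.reindex) (auto simp: inj_on_def)
  have Fn: "{S. S \<subseteq> {1..n} \<and> card S = n} = {{1..n}}"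
    using card_subset_eq[of "{1..n}"] by auto
  have c6: "tau_curv f blk Mi n n = ?G"
    unfolding tau_curv_def Fn using glob by (simp add: one_ereal_def[symmetric])
  have c4: "tau_curv f blk Mi n 1 \<le> tau_curv f blk Mi n \<tau>"
    unfolding c3 unfolding prod_curv_def coord_curv_def tau_curv_def
  proof (rule ereal_avg_ineq[OF n1 t1 tn])
    fix k assume "k \<in> {1..n}" then show "?C {k} \<noteq> -\<infinity>" by (intro nm) auto
  next
    fix T assume "T \<subseteq> {1..n}" then show "?C T \<noteq> -\<infinity>" by (rule nm)
  next
    fix T k assume "T \<subseteq> {1..n}" "card T = \<tau>" "k \<in> T"
    then show "?C {k} \<le> ?C T" by (intro set_curv_mono) auto
  qed
  have finF: "finite ?F" by (rule finite_subset[of _ "Pow {1..n}"]) auto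
  have cardF: "card ?F = n choose \<tau>" using n_subsets[of "{1..n}" \<tau>] by simp
  have neF: "?F \<noteq> {}" using S by auto
  have c5: "tau_curv f blk Mi n \<tau> \<le> ?G"
    unfolding tau_curv_def cardF[symmetric]
    by (rule ereal_avg_le[OF finF neF]) (use le_G nm in blast)+
  show ?thesis using c1 c2 c3 c4 c5 c6 by simp
qed

end
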